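(* Let $\mathscr G=(\mathscr V,\mathscr E)$ be a finite connected graph with $N$ vertices, let $M\ge 0$ be an integer, and let $(X_t)_{t\in\mathbb N}$ be the uniform reshuffling model on $\mathscr G$ with $M$ coins, started from an arbitrary configuration. Then for every vertex $x\in\mathscr V$ and every $c\in\{0,1,\dots,M\}$, $$\lim_{t\to\infty}P(X_t(x)=c)=\binom{M-c+N-2}{N-2}\Big/\binom{M+N-1}{N-1}.$$ In particular, when $N$ and $T=M/N$ are large, $\lim_{t\to\infty}P(X_t(x)=c)\approx \frac1T e^{-c/T}$.
   Context: A configuration is a map $\xi:\mathscr V\to\mathbb N$ (number of coins at each vertex); $\mathscr C_{N,M}$ denotes the set of configurations with $\sum_{x}\xi(x)=M$. The uniform reshuffling model is the discrete-time Markov chain on $\mathscr C_{N,M}$ evolving as follows: at each time step $t$, an edge $(x,y)\in\mathscr E$ is chosen uniformly at random, $U$ is drawn uniformly from $\{0,1,\dots,X_t(x)+X_t(y)\}$ (independently of everything else), and one sets $X_{t+1}(x)=U$, $X_{t+1}(y)=X_t(x)+X_t(y)-U$, and $X_{t+1}(z)=X_t(z)$ for $z\notin\{x,y\}$. *)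

theory Defs
  imports "HOL-Probability.Probability"
begin

text \<open>A finite graph is given by a vertex set V and an edge set E of pairs (each
  undirected edge appears in some orientation; orientation is irrelevant for the
  dynamics since U is uniform on {0..X(x)+X(y)}).\<close>

definition finite_graph :: "'v set \<Rightarrow> ('v \<times> 'v) set \<Rightarrow> bool" where
  "finite_graph V E \<longleftrightarrow> finite V \<and> E \<subseteq> V \<times> V \<and> (\<forall>(x,y)\<in>E. x \<noteq> y)"

definition connected_graph :: "'v set \<Rightarrow> ('v \<times> 'v) set \<Rightarrow> bool" where
  "connected_graph V E \<longleftrightarrow> (\<forall>x\<in>V. \<forall>y\<in>V. (x, y) \<in> (E \<union> E\<inverse>)\<^sup>*)"

definition configs :: "'v set \<Rightarrow> nat \<Rightarrow> ('v \<Rightarrow> nat) set" where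
  "configs V M = {\<xi>. (\<forall>z. z \<notin> V \<longrightarrow> \<xi> z = 0) \<and> (\<Sum>z\<in>V. \<xi> z) = M}"

definition reshuffle_step :: "('v \<times> 'v) set \<Rightarrow> ('v \<Rightarrow> nat) \<Rightarrow> ('v \<Rightarrow> nat) pmf" where
  "reshuffle_step E \<xi> =
     pmf_of_set E \<bind> (\<lambda>(x, y).
       pmf_of_set {0 .. \<xi> x + \<xi> y} \<bind> (\<lambda>u.
         return_pmf (\<xi>(x := u, y := \<xi> x + \<xi> y - u))))"

primrec reshuffle_dist :: "('v \<times> 'v) set \<Rightarrow> ('v \<Rightarrow> nat) \<Rightarrow> nat \<Rightarrow> ('v \<Rightarrow> nat) pmf" where
  "reshuffle_dist E \<xi>0 0 = return_pmf \<xi>0"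
| "reshuffle_dist E \<xi>0 (Suc t) = reshuffle_dist E \<xi>0 t \<bind> reshuffle_step E"

end

theory Submission
  imports Defs "HOL-Library.Multiset"
begin

lemma configs_bij:
  assumes "finite W"
  shows "bij_betw count (multisets_of_size W m) (configs W m)"
proof (rule bij_betw_imageI)
  show "inj_on count (multisets_of_size W m)"
    by (meson count_inject inj_onI)
  show "count ` multisets_of_size W m = configs W m"
  proof
    show "count ` multisets_of_size W m \<subseteq> configs W m"
    proof
      fix f assume "f \<in> count ` multisets_of_size W m"
      then obtain X where X: "set_mset X \<subseteq> W" "size X = m" "f = count X"
        by (auto simp: multisets_of_size_def)
      have "sum (count X) W = sum (count X) (set_mset X)"
        using X assms by (intro sum.mono_neutral_right) (auto simp: not_in_iff)
      then show "f \<in> configs W m" using X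
        by (auto simp: configs_def size_multiset_overloaded_eq not_in_iff[symmetric])
    qed
    show "configs W m \<subseteq> count ` multisets_of_size W m"
    proof
      fix f assume f: "f \<in> configs W m"
      have fin: "finite {x. f x > 0}"
        proof (rule finite_subset[OF _ assms])
        show "{x. f x > 0} \<subseteq> W" using f by (auto simp: configs_def)
      qed
      have cf: "count (Abs_multiset f) = f" using count_Abs_multiset[OF fin] .
      have ss: "set_mset (Abs_multiset f) \<subseteq> W"
        using f by (auto simp: set_mset_def cf configs_def)
      have "size (Abs_multiset f) = sum f (set_mset (Abs_multiset f))"
        by (simp add: size_multiset_overloaded_eq cf)
      also have "\<dots> = sum f W"
        using ss assms by (intro sum.mono_neutral_left) (auto simp: set_mset_def cf)
      also have "\<dots> = m" using f by (simp add: configs_def)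
      finally show "f \<in> count ` multisets_of_size W m"
        using ss cf by (auto simp: multisets_of_size_def intro!: image_eqI[of _ _ "Abs_multiset f"])
    qed
  qed
qed

lemma configs_finite: "finite W \<Longrightarrow> finite (configs W m)"
  using bij_betw_finite[OF configs_bij] finite_multisets_of_size by blast

lemma configs_card:
  assumes "finite W" "W \<noteq> {}"
  shows "card (configs W m) = (m + card W - 1) choose (card W - 1)"
proof -
  have "card (configs W m) = card (multisets_of_size W m)"
    using bij_betw_same_card[OF configs_bij[OF assms(1)]] by simp
  also have "\<dots> = (card W + m - 1) choose m" using card_multisets_of_size[OF assms(1)] .
  also have "\<dots> = (m + card W - 1) choose (card W - 1)"
  proof -
    have "card W \<ge> 1" using assms by (simp add: Suc_le_eq card_gt_0_iff)
    then show ?thesis using binomial_symmetric[of m "card W + m - 1"]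
      by (simp add: add.commute)
  qed
  finally show ?thesis .
qed

definition cnd :: "('v \<Rightarrow> nat) \<Rightarrow> ('v \<Rightarrow> nat) \<Rightarrow> 'v \<Rightarrow> 'v \<Rightarrow> bool" where
  "cnd \<xi> \<eta> a b \<longleftrightarrow> (\<forall>z. z \<noteq> a \<and> z \<noteq> b \<longrightarrow> \<xi> z = \<eta> z) \<and> \<eta> a + \<eta> b = \<xi> a + \<xi> b"

lemma upd_eq_iff:
  assumes "a \<noteq> b" "u \<le> \<xi> a + \<xi> b"
  shows "(\<xi>(a := u, b := \<xi> a + \<xi> b - u) = \<eta>) \<longleftrightarrow> cnd \<xi> \<eta> a b \<and> u = \<eta> a"
proof
  assume h: "\<xi>(a := u, b := \<xi> a + \<xi> b - u) = \<eta>"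
  have ha: "\<eta> a = u" using assms by (simp add: h[symmetric])
  have hb: "\<eta> b = \<xi> a + \<xi> b - u" by (simp add: h[symmetric])
  have hz: "\<forall>z. z \<noteq> a \<and> z \<noteq> b \<longrightarrow> \<xi> z = \<eta> z" by (simp add: h[symmetric])
  show "cnd \<xi> \<eta> a b \<and> u = \<eta> a" using ha hb hz assms(2) by (simp add: cnd_def)
next
  assume h: "cnd \<xi> \<eta> a b \<and> u = \<eta> a"
  show "\<xi>(a := u, b := \<xi> a + \<xi> b - u) = \<eta>"
  proof
    fix z
    show "(\<xi>(a := u, b := \<xi> a + \<xi> b - u)) z = \<eta> z"
    proof -
      have hz: "z \<noteq> a \<Longrightarrow> z \<noteq> b \<Longrightarrow> \<xi> z = \<eta> z" and hab: "\<eta> a + \<eta> b = \<xi> a + \<xi> b"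
        and hu: "u = \<eta> a" using h unfolding cnd_def by auto
      show ?thesis
      proof (cases "z = b")
        case True then show ?thesis using hab hu by simp
      next
        case False
        then show ?thesis using hz hu by (cases "z = a") simp_all
      qed
    qed
  qed
qed

lemma inner_pmf:
  assumes "a \<noteq> b"
  shows "pmf (pmf_of_set {0..\<xi> a + \<xi> b} \<bind> (\<lambda>u. return_pmf (\<xi>(a := u, b := \<xi> a + \<xi> b - u)))) \<eta>
       = (if cnd \<xi> \<eta> a b then 1 / (real (\<xi> a + \<xi> b) + 1) else 0)"
proof -
  let ?s = "\<xi> a + \<xi> b"
  have "pmf (pmf_of_set {0..?s} \<bind> (\<lambda>u. return_pmf (\<xi>(a := u, b := ?s - u)))) \<eta>
      = (\<Sum>u\<in>{0..?s}. indicator {\<eta>} (\<xi>(a := u, b := ?s - u))) / real (card {0..?s})"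
    by (subst pmf_bind_pmf_of_set) auto
  also have "(\<Sum>u\<in>{0..?s}. indicator {\<eta>} (\<xi>(a := u, b := ?s - u)) :: real)
      = (\<Sum>u\<in>{0..?s}. if cnd \<xi> \<eta> a b \<and> u = \<eta> a then 1 else 0)"
  proof (rule sum.cong)
    fix u assume "u \<in> {0..?s}"
    then have "u \<le> ?s" by simp
    from upd_eq_iff[OF assms this, of \<eta>]
    show "indicator {\<eta>} (\<xi>(a := u, b := ?s - u)) = (if cnd \<xi> \<eta> a b \<and> u = \<eta> a then 1 else (0::real))"
      unfolding indicator_def by (simp only: singleton_iff of_bool_def) 
  qed simp
  also have "\<dots> = (if cnd \<xi> \<eta> a b then 1 else 0)"
  proof (cases "cnd \<xi> \<eta> a b")
    case True
    then have "\<eta> a \<in> {0..?s}" by (auto simp: cnd_def)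
    then show ?thesis using True by (simp add: sum.delta)
  qed simp
  also have "(if cnd \<xi> \<eta> a b then 1 else 0) / real (card {0..?s}) = (if cnd \<xi> \<eta> a b then 1 / (real ?s + 1) else 0)"
    by simp
  finally show ?thesis .
qed


lemma sum_two:
  assumes "finite V" "a \<in> V" "b \<in> V" "a \<noteq> b"
  shows "(\<Sum>z\<in>V. f z) = f a + f b + (\<Sum>z\<in>V - {a} - {b}. f z)"
proof -
  have "(\<Sum>z\<in>V. f z) = f a + (\<Sum>z\<in>V - {a}. f z)"
    using assms by (simp add: sum.remove)
  also have "(\<Sum>z\<in>V - {a}. f z) = f b + (\<Sum>z\<in>V - {a} - {b}. f z)"
    using assms by (subst sum.remove[of _ b]) auto
  finally show ?thesis by (simp add: add.assoc)
qed

lemma cnd_sym: "cnd \<xi> \<eta> a b \<longleftrightarrow> cnd \<eta> \<xi> a b"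
  unfolding cnd_def by metis

lemma cnd_configs:
  assumes "cnd \<xi> \<eta> a b" "\<xi> \<in> configs V M" "a \<in> V" "b \<in> V" "a \<noteq> b" "finite V"
  shows "\<eta> \<in> configs V M"
proof -
  have hz: "\<And>z. z \<noteq> a \<Longrightarrow> z \<noteq> b \<Longrightarrow> \<eta> z = \<xi> z" and hab: "\<eta> a + \<eta> b = \<xi> a + \<xi> b"
    using assms(1) unfolding cnd_def by auto
  have "\<forall>z. z \<notin> V \<longrightarrow> \<eta> z = 0"
  proof (intro allI impI)
    fix z assume "z \<notin> V"
    then have "z \<noteq> a" "z \<noteq> b" using assms(3,4) by auto
    then have "\<eta> z = \<xi> z" by (rule hz)
    then show "\<eta> z = 0" using assms(2) \<open>z \<notin> V\<close> by (simp add: configs_def)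
  qed
  moreover have "(\<Sum>z\<in>V. \<eta> z) = (\<Sum>z\<in>V. \<xi> z)"
  proof -
    have "(\<Sum>z\<in>V - {a} - {b}. \<eta> z) = (\<Sum>z\<in>V - {a} - {b}. \<xi> z)"
      by (rule sum.cong) (auto simp: hz)
    then show ?thesis using sum_two[OF assms(6,3,4,5)] hab by metis
  qed
  ultimately show ?thesis using assms(2) by (simp add: configs_def)
qed

locale rs =
  fixes V :: "'v set" and E :: "('v \<times> 'v) set"
  assumes fg: "finite_graph V E" and ne: "E \<noteq> {}"
begin

lemma finV: "finite V" using fg unfolding finite_graph_def by simp

lemma finE: "finite E"
  using fg unfolding finite_graph_def by (meson finite_SigmaI finite_subset)

lemma noloop: "(a, b) \<in> E \<Longrightarrow> a \<noteq> b"
  using fg unfolding finite_graph_def by auto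

lemma EV: "(a, b) \<in> E \<Longrightarrow> a \<in> V \<and> b \<in> V"
  using fg unfolding finite_graph_def by auto

definition tm :: "('v \<Rightarrow> nat) \<Rightarrow> ('v \<Rightarrow> nat) \<Rightarrow> 'v \<times> 'v \<Rightarrow> real" where
  "tm \<xi> \<eta> e = (case e of (a, b) \<Rightarrow> if cnd \<xi> \<eta> a b then 1 / (real (\<xi> a + \<xi> b) + 1) else 0)"

lemma step_pmf: "pmf (reshuffle_step E \<xi>) \<eta> = (\<Sum>e\<in>E. tm \<xi> \<eta> e) / real (card E)"
  unfolding reshuffle_step_def
  apply (subst pmf_bind_pmf_of_set[OF ne finE])
  apply (rule arg_cong[where f="\<lambda>x. x / real (card E)"])
  apply (rule sum.cong[OF refl])
  subgoal for e
    apply (induct e)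
    apply (simp only: tm_def case_prod_conv)
    apply (rule inner_pmf)
    using noloop by blast
  done

lemma tm_sym: "tm \<xi> \<eta> e = tm \<eta> \<xi> e"
  unfolding tm_def by (cases e) (auto simp: cnd_sym, auto simp: cnd_def)

lemma step_sym: "pmf (reshuffle_step E \<xi>) \<eta> = pmf (reshuffle_step E \<eta>) \<xi>"
  unfolding step_pmf by (simp add: tm_sym)

lemma tm_nonneg: "tm \<xi> \<eta> e \<ge> 0"
  unfolding tm_def by (cases e) auto

lemma step_set: "\<eta> \<in> set_pmf (reshuffle_step E \<xi>) \<longleftrightarrow> (\<exists>(a, b)\<in>E. cnd \<xi> \<eta> a b)"
proof -
  have cE: "real (card E) > 0" using ne finE by (simp add: card_gt_0_iff)
  have "\<eta> \<in> set_pmf (reshuffle_step E \<xi>) \<longleftrightarrow> (\<Sum>e\<in>E. tm \<xi> \<eta> e) \<noteq> 0"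
    using cE by (simp add: set_pmf_iff step_pmf)
  also have "\<dots> \<longleftrightarrow> (\<exists>e\<in>E. tm \<xi> \<eta> e \<noteq> 0)"
    using sum_nonneg_eq_0_iff[OF finE, of "tm \<xi> \<eta>"] tm_nonneg by auto
  also have "\<dots> \<longleftrightarrow> (\<exists>(a, b)\<in>E. cnd \<xi> \<eta> a b)"
  proof -
    have "\<And>a b. tm \<xi> \<eta> (a, b) \<noteq> 0 \<longleftrightarrow> cnd \<xi> \<eta> a b"
      unfolding tm_def by (simp add: add_nonneg_eq_0_iff)
    then show ?thesis by auto
  qed
  finally show ?thesis .
qed

lemma step_support: "\<xi> \<in> configs V M \<Longrightarrow> set_pmf (reshuffle_step E \<xi>) \<subseteq> configs V M"
proof
  fix \<eta> assume "\<xi> \<in> configs V M" "\<eta> \<in> set_pmf (reshuffle_step E \<xi>)"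
  then obtain a b where "(a, b) \<in> E" "cnd \<xi> \<eta> a b" using step_set by blast
  then show "\<eta> \<in> configs V M"
    using cnd_configs[OF _ \<open>\<xi> \<in> configs V M\<close>] EV noloop finV by blast
qed

lemma self_loop: "\<xi> \<in> set_pmf (reshuffle_step E \<xi>)"
  using ne unfolding step_set cnd_def by auto

lemma markov: "reshuffle_dist E \<xi> (t + n) = reshuffle_dist E \<xi> t \<bind> (\<lambda>\<zeta>. reshuffle_dist E \<zeta> n)"
proof (induction n)
  case 0
  then show ?case by (simp add: bind_return_pmf')
next
  case (Suc n)
  then show ?case by (simp add: bind_assoc_pmf)
qed

lemma dist_one: "reshuffle_dist E \<xi> (Suc 0) = reshuffle_step E \<xi>"
  by (simp add: bind_return_pmf)

lemma dist_Suc': "reshuffle_dist E \<xi> (Suc n) = reshuffle_step E \<xi> \<bind> (\<lambda>\<zeta>. reshuffle_dist E \<zeta> n)"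
  using markov[of \<xi> "Suc 0" n] unfolding dist_one by simp

lemma dist_support: "\<xi> \<in> configs V M \<Longrightarrow> set_pmf (reshuffle_dist E \<xi> n) \<subseteq> configs V M"
proof (induction n)
  case (Suc n)
  then show ?case using step_support by fastforce
qed simp

lemma set_dist_add:
  "set_pmf (reshuffle_dist E \<xi> (t + n)) = (\<Union>\<zeta>\<in>set_pmf (reshuffle_dist E \<xi> t). set_pmf (reshuffle_dist E \<zeta> n))"
  by (simp add: markov)

lemma set_dist_mono:
  "\<eta> \<in> set_pmf (reshuffle_dist E \<xi> n) \<Longrightarrow> n \<le> m \<Longrightarrow> \<eta> \<in> set_pmf (reshuffle_dist E \<xi> m)"
proof (induction m)
  case (Suc m)
  then show ?case using self_loop by (cases "n = Suc m") auto
qed simp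

lemma set_dist_sym:
  "\<eta> \<in> set_pmf (reshuffle_dist E \<xi> n) \<Longrightarrow> \<xi> \<in> set_pmf (reshuffle_dist E \<eta> n)"
proof (induction n arbitrary: \<eta>)
  case (Suc n)
  then obtain \<zeta> where z: "\<zeta> \<in> set_pmf (reshuffle_dist E \<xi> n)" "\<eta> \<in> set_pmf (reshuffle_step E \<zeta>)"
    by auto
  have "\<zeta> \<in> set_pmf (reshuffle_step E \<eta>)"
    using z(2) by (simp add: set_pmf_iff step_sym)
  then show ?case using Suc.IH[OF z(1)] by (subst dist_Suc') auto
qed simp

definition reach where "reach \<xi> \<eta> \<longleftrightarrow> (\<exists>n. \<eta> \<in> set_pmf (reshuffle_dist E \<xi> n))"

lemma reach_refl: "reach \<xi> \<xi>"
  unfolding reach_def by (rule exI[of _ 0]) simp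

lemma reach_trans: "reach \<xi> \<zeta> \<Longrightarrow> reach \<zeta> \<eta> \<Longrightarrow> reach \<xi> \<eta>"
  unfolding reach_def using set_dist_add by blast

lemma reach_sym: "reach \<xi> \<eta> \<Longrightarrow> reach \<eta> \<xi>"
  unfolding reach_def using set_dist_sym by blast

lemma reach_step: "\<eta> \<in> set_pmf (reshuffle_step E \<xi>) \<Longrightarrow> reach \<xi> \<eta>"
  unfolding reach_def by (rule exI[of _ 1]) (simp add: dist_one)


definition mv :: "('v \<Rightarrow> nat) \<Rightarrow> 'v \<Rightarrow> 'v \<Rightarrow> 'v \<Rightarrow> nat" where
  "mv \<xi> v w = (\<lambda>z. \<xi> z - (if z = v then 1 else 0) + (if z = w then 1 else 0))"

lemma cnd_mv: "v \<noteq> w \<Longrightarrow> 1 \<le> \<xi> v \<Longrightarrow> cnd \<xi> (mv \<xi> v w) v w \<and> cnd \<xi> (mv \<xi> v w) w v"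
proof -
  assume vw: "v \<noteq> w" and v1: "1 \<le> \<xi> v"
  have a: "mv \<xi> v w v = \<xi> v - 1" using vw by (simp add: mv_def)
  have b: "mv \<xi> v w w = \<xi> w + 1" using vw by (simp add: mv_def)
  have c: "\<forall>z. z \<noteq> v \<and> z \<noteq> w \<longrightarrow> \<xi> z = mv \<xi> v w z" by (simp add: mv_def)
  have d: "mv \<xi> v w v + mv \<xi> v w w = \<xi> v + \<xi> w" unfolding a b using v1 by simp
  have c2: "\<forall>z. z \<noteq> w \<and> z \<noteq> v \<longrightarrow> \<xi> z = mv \<xi> v w z" using c by blast
  have d2: "mv \<xi> v w w + mv \<xi> v w v = \<xi> w + \<xi> v" using d by linarith
  show ?thesis unfolding cnd_def using c d c2 d2 by blast
qed

lemma move_edge: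
  assumes "(v, w) \<in> E \<union> E\<inverse>" "1 \<le> \<xi> v"
  shows "mv \<xi> v w \<in> set_pmf (reshuffle_step E \<xi>)"
proof -
  have "v \<noteq> w" using assms(1) noloop by auto
  then have cm: "cnd \<xi> (mv \<xi> v w) v w" "cnd \<xi> (mv \<xi> v w) w v" using cnd_mv[of v w \<xi>] assms(2) by auto
  show ?thesis unfolding step_set
  proof (cases "(v, w) \<in> E")
    case True then show "\<exists>(a, b)\<in>E. cnd \<xi> (mv \<xi> v w) a b" using cm(1) by blast
  next
    case False then have "(w, v) \<in> E" using assms(1) by auto
    then show "\<exists>(a, b)\<in>E. cnd \<xi> (mv \<xi> v w) a b" using cm(2) by blast
  qed
qed

lemma move_path:
  assumes "(v, w) \<in> (E \<union> E\<inverse>)\<^sup>*" "1 \<le> \<xi> v"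
  shows "reach \<xi> (mv \<xi> v w)"
  using assms(1)
proof (induction rule: rtrancl_induct)
  case base
  have "mv \<xi> v v = \<xi>"
  proof
    fix z show "mv \<xi> v v z = \<xi> z" using assms(2) by (cases "z = v") (simp_all add: mv_def)
  qed
  then show ?case by (simp add: reach_refl)
next
  case (step w w')
  let ?\<zeta> = "mv \<xi> v w"
  have "1 \<le> ?\<zeta> w" by (simp add: mv_def)
  then have "reach ?\<zeta> (mv ?\<zeta> w w')" using move_edge[OF step(2)] reach_step by blast
  moreover have "mv ?\<zeta> w w' = mv \<xi> v w'"
  proof
    fix z show "mv ?\<zeta> w w' z = mv \<xi> v w' z" unfolding mv_def by simp
  qed
  ultimately show ?case using reach_trans[OF step(3)] by simp
qed

lemma reach_configs: "reach \<xi> \<eta> \<Longrightarrow> \<xi> \<in> configs V M \<Longrightarrow> \<eta> \<in> configs V M"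
  unfolding reach_def using dist_support by blast

lemma gather:
  assumes conn: "connected_graph V E" and x0: "x0 \<in> V"
  shows "\<xi> \<in> configs V M \<Longrightarrow> reach \<xi> (\<lambda>z. if z = x0 then M else 0)"
proof (induction "sum \<xi> (V - {x0})" arbitrary: \<xi> rule: less_induct)
  case less
  show ?case
  proof (cases "\<forall>z\<in>V - {x0}. \<xi> z = 0")
    case True
    have s: "sum \<xi> V = \<xi> x0 + sum \<xi> (V - {x0})" using x0 finV by (simp add: sum.remove)
    have "sum \<xi> (V - {x0}) = 0" using True by simp
    then have "\<xi> x0 = M" using s less.prems by (simp add: configs_def)
    have "\<xi> = (\<lambda>z. if z = x0 then M else 0)"
    proof
      fix z
      show "\<xi> z = (if z = x0 then M else 0)"
      proof (cases "z = x0")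
        case True then show ?thesis using \<open>\<xi> x0 = M\<close> by simp
      next
        case False
        then show ?thesis using \<open>\<forall>z\<in>V - {x0}. \<xi> z = 0\<close> less.prems
          by (cases "z \<in> V") (auto simp: configs_def)
      qed
    qed
    then show ?thesis by (simp add: reach_refl)
  next
    case False
    then obtain v where v: "v \<in> V" "v \<noteq> x0" "1 \<le> \<xi> v" by (auto simp: Suc_le_eq)
    let ?\<zeta> = "mv \<xi> v x0"
    have r: "reach \<xi> ?\<zeta>"
    proof (rule move_path)
      show "(v, x0) \<in> (E \<union> E\<inverse>)\<^sup>*" using conn v(1) x0 unfolding connected_graph_def by blast
    qed (rule v(3))
    have c: "?\<zeta> \<in> configs V M" using reach_configs[OF r less.prems] .
    have fin: "finite (V - {x0})" using finV by simp
    have v': "v \<in> V - {x0}" using v by simp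
    have "sum ?\<zeta> (V - {x0}) = ?\<zeta> v + sum ?\<zeta> (V - {x0} - {v})"
      using sum.remove[OF fin v'] .
    also have "sum ?\<zeta> (V - {x0} - {v}) = sum \<xi> (V - {x0} - {v})"
      by (rule sum.cong) (simp_all add: mv_def)
    also have "?\<zeta> v = \<xi> v - 1" using v by (simp add: mv_def)
    finally have "sum ?\<zeta> (V - {x0}) < sum \<xi> (V - {x0})"
      using sum.remove[OF fin v', of \<xi>] v(3) by simp
    then have "reach ?\<zeta> (\<lambda>z. if z = x0 then M else 0)" using less.hyps c by blast
    then show ?thesis by (rule reach_trans[OF r])
  qed
qed

lemma reach_all:
  assumes conn: "connected_graph V E" and "\<xi> \<in> configs V M" "\<eta> \<in> configs V M"
  shows "reach \<xi> \<eta>"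
proof -
  obtain a b where "(a, b) \<in> E" using ne by auto
  then have x0: "a \<in> V" using EV by blast
  have "reach \<xi> (\<lambda>z. if z = a then M else 0)" using gather[OF conn x0 assms(2)] .
  moreover have "reach (\<lambda>z. if z = a then M else 0) \<eta>" using gather[OF conn x0 assms(3)] by (rule reach_sym)
  ultimately show ?thesis by (rule reach_trans)
qed

end

lemma uniform_k:
  fixes P :: "'a \<Rightarrow> nat \<Rightarrow> bool"
  assumes "finite A" "\<forall>p\<in>A. \<exists>n. P p n" "\<And>p n m. P p n \<Longrightarrow> n \<le> m \<Longrightarrow> P p m"
  shows "\<exists>k. \<forall>p\<in>A. P p k"
  using assms(1,2)
proof (induction A rule: finite_induct)
  case empty then show ?case by simp
next
  case (insert x F)
  then obtain k where k: "\<forall>p\<in>F. P p k" by auto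
  obtain n where n: "P x n" using insert.prems by auto
  have "\<forall>p\<in>insert x F. P p (max k n)"
  proof
    fix p assume "p \<in> insert x F"
    then show "P p (max k n)"
    proof
      assume "p = x" then show ?thesis using assms(3)[OF n, of "max k n"] by simp
    next
      assume "p \<in> F" then show ?thesis using assms(3)[of p k] k by simp
    qed
  qed
  then show ?case by blast
qed


lemma interval_step:
  fixes \<mu> w :: "'a \<Rightarrow> real"
  assumes "finite S" "\<forall>\<zeta>\<in>S. \<delta> \<le> w \<zeta>" "sum w S = 1" "\<forall>\<zeta>\<in>S. a \<le> \<mu> \<zeta> \<and> \<mu> \<zeta> \<le> b" "sum \<mu> S = 1"
  shows "a + \<delta> * (1 - real (card S) * a) \<le> (\<Sum>\<zeta>\<in>S. \<mu> \<zeta> * w \<zeta>)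
       \<and> (\<Sum>\<zeta>\<in>S. \<mu> \<zeta> * w \<zeta>) \<le> b - \<delta> * (real (card S) * b - 1)"
proof
  have e1: "(\<Sum>\<zeta>\<in>S. (\<mu> \<zeta> - a) * w \<zeta>) = (\<Sum>\<zeta>\<in>S. \<mu> \<zeta> * w \<zeta>) - a * sum w S"
    by (simp add: left_diff_distrib sum_subtractf sum_distrib_left)
  have e2: "(\<Sum>\<zeta>\<in>S. (\<mu> \<zeta> - a) * \<delta>) \<le> (\<Sum>\<zeta>\<in>S. (\<mu> \<zeta> - a) * w \<zeta>)"
    by (rule sum_mono) (use assms(2,4) in \<open>auto intro: mult_left_mono\<close>)
  have e3: "(\<Sum>\<zeta>\<in>S. (\<mu> \<zeta> - a) * \<delta>) = \<delta> * (1 - real (card S) * a)"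
  proof -
    have "(\<Sum>\<zeta>\<in>S. (\<mu> \<zeta> - a) * \<delta>) = (\<Sum>\<zeta>\<in>S. (\<mu> \<zeta> - a)) * \<delta>"
      by (simp add: sum_distrib_right)
    also have "(\<Sum>\<zeta>\<in>S. (\<mu> \<zeta> - a)) = 1 - real (card S) * a"
      using assms(5) by (simp add: sum_subtractf)
    finally show ?thesis by simp
  qed
  show "a + \<delta> * (1 - real (card S) * a) \<le> (\<Sum>\<zeta>\<in>S. \<mu> \<zeta> * w \<zeta>)"
    using e1 e2 e3 assms(3) by simp
next
  have e1: "(\<Sum>\<zeta>\<in>S. (b - \<mu> \<zeta>) * w \<zeta>) = b * sum w S - (\<Sum>\<zeta>\<in>S. \<mu> \<zeta> * w \<zeta>)"
    by (simp add: left_diff_distrib sum_subtractf sum_distrib_left)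
  have e2: "(\<Sum>\<zeta>\<in>S. (b - \<mu> \<zeta>) * \<delta>) \<le> (\<Sum>\<zeta>\<in>S. (b - \<mu> \<zeta>) * w \<zeta>)"
    by (rule sum_mono) (use assms(2,4) in \<open>auto intro: mult_left_mono\<close>)
  have e3: "(\<Sum>\<zeta>\<in>S. (b - \<mu> \<zeta>) * \<delta>) = \<delta> * (real (card S) * b - 1)"
  proof -
    have "(\<Sum>\<zeta>\<in>S. (b - \<mu> \<zeta>) * \<delta>) = (\<Sum>\<zeta>\<in>S. (b - \<mu> \<zeta>)) * \<delta>"
      by (simp add: sum_distrib_right)
    also have "(\<Sum>\<zeta>\<in>S. (b - \<mu> \<zeta>)) = real (card S) * b - 1"
      using assms(5) by (simp add: sum_subtractf)
    finally show ?thesis by simp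
  qed
  show "(\<Sum>\<zeta>\<in>S. \<mu> \<zeta> * w \<zeta>) \<le> b - \<delta> * (real (card S) * b - 1)"
    using e1 e2 e3 assms(3) by simp
qed

lemma filterlim_div_nat: "0 < (k::nat) \<Longrightarrow> filterlim (\<lambda>t. t div k) sequentially sequentially"
  unfolding filterlim_at_top eventually_sequentially
proof (intro allI exI allI impI)
  fix Z t assume "0 < k" "Z * k \<le> t"
  then show "Z \<le> t div k" by (simp add: less_eq_div_iff_mult_less_eq)
qed

context rs
begin

lemma pmf_dist_add:
  assumes "\<xi> \<in> configs V M"
  shows "pmf (reshuffle_dist E \<xi> (t + n)) \<eta>
       = (\<Sum>\<zeta>\<in>configs V M. pmf (reshuffle_dist E \<xi> t) \<zeta> * pmf (reshuffle_dist E \<zeta> n) \<eta>)"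
proof -
  have "pmf (reshuffle_dist E \<xi> (t + n)) \<eta> = (\<integral>\<zeta>. pmf (reshuffle_dist E \<zeta> n) \<eta> \<partial>measure_pmf (reshuffle_dist E \<xi> t))"
    unfolding markov pmf_bind ..
  also have "\<dots> = (\<Sum>\<zeta>\<in>configs V M. pmf (reshuffle_dist E \<zeta> n) \<eta> * pmf (reshuffle_dist E \<xi> t) \<zeta>)"
    by (rule integral_measure_pmf_real)
       (use configs_finite[OF finV] dist_support[OF assms] in auto)
  finally show ?thesis by (simp add: mult.commute)
qed

lemma colsum:
  assumes "\<eta> \<in> configs V M"
  shows "(\<Sum>\<zeta>\<in>configs V M. pmf (reshuffle_dist E \<zeta> n) \<eta>) = 1"
  using assms
proof (induction n arbitrary: \<eta>)
  case 0
  show ?case using 0 configs_finite[OF finV, of M] by (simp add: indicator_def)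
next
  case (Suc n)
  let ?S = "configs V M"
  have "(\<Sum>\<zeta>\<in>?S. pmf (reshuffle_dist E \<zeta> (Suc n)) \<eta>)
      = (\<Sum>\<zeta>\<in>?S. \<Sum>\<theta>\<in>?S. pmf (reshuffle_dist E \<zeta> n) \<theta> * pmf (reshuffle_dist E \<theta> (Suc 0)) \<eta>)"
    by (rule sum.cong) (use pmf_dist_add[of _ M n "Suc 0" \<eta>] in auto)
  also have "\<dots> = (\<Sum>\<theta>\<in>?S. (\<Sum>\<zeta>\<in>?S. pmf (reshuffle_dist E \<zeta> n) \<theta>) * pmf (reshuffle_dist E \<theta> (Suc 0)) \<eta>)"
    by (subst sum.swap) (simp add: sum_distrib_right)
  also have "\<dots> = (\<Sum>\<theta>\<in>?S. pmf (reshuffle_step E \<eta>) \<theta>)"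
    by (rule sum.cong) (simp_all add: Suc.IH step_sym dist_one del: reshuffle_dist.simps)
  also have "\<dots> = 1"
    by (rule sum_pmf_eq_1[OF configs_finite[OF finV] step_support[OF Suc.prems]])
  finally show ?case .
qed


lemma convergence:
  assumes conn: "connected_graph V E" and \<xi>0: "\<xi>0 \<in> configs V M" and \<eta>: "\<eta> \<in> configs V M"
  shows "(\<lambda>t. pmf (reshuffle_dist E \<xi>0 t) \<eta>) \<longlonglongrightarrow> 1 / real (card (configs V M))"
proof -
  define S where "S = configs V M"
  define N where "N = real (card S)"
  define \<mu> where "\<mu> t = pmf (reshuffle_dist E \<xi>0 t)" for t
  have finS: "finite S" unfolding S_def by (rule configs_finite[OF finV])
  have Sne: "S \<noteq> {}" using \<xi>0 S_def by auto
  have Npos: "N > 0" unfolding N_def using finS Sne by (simp add: card_gt_0_iff)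
  have "\<exists>k. \<forall>p\<in>S \<times> S. snd p \<in> set_pmf (reshuffle_dist E (fst p) k)"
  proof (rule uniform_k)
    show "finite (S \<times> S)" using finS by simp
    show "\<forall>p\<in>S \<times> S. \<exists>n. snd p \<in> set_pmf (reshuffle_dist E (fst p) n)"
      using reach_all[OF conn] unfolding reach_def S_def by auto
  qed (rule set_dist_mono)
  then obtain k0 where k0: "\<forall>p\<in>S \<times> S. snd p \<in> set_pmf (reshuffle_dist E (fst p) k0)" by blast
  define k where "k = Suc k0"
  have kpos: "k > 0" unfolding k_def by simp
  have kS: "\<And>\<xi> \<eta>. \<xi> \<in> S \<Longrightarrow> \<eta> \<in> S \<Longrightarrow> \<eta> \<in> set_pmf (reshuffle_dist E \<xi> k)"
  proof -
    fix \<xi> \<eta> assume "\<xi> \<in> S" "\<eta> \<in> S"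
    then have "\<eta> \<in> set_pmf (reshuffle_dist E \<xi> k0)" using k0 by auto
    then show "\<eta> \<in> set_pmf (reshuffle_dist E \<xi> k)" unfolding k_def by (rule set_dist_mono) simp
  qed
  define f where "f p = pmf (reshuffle_dist E (fst p) k) (snd p)" for p
  define \<delta> where "\<delta> = Min (f ` (S \<times> S))"
  have \<delta>pos: "\<delta> > 0"
    unfolding \<delta>_def
  proof (subst Min_gr_iff)
    show "finite (f ` (S \<times> S))" using finS by simp
    show "f ` (S \<times> S) \<noteq> {}" using Sne by simp
    show "\<forall>a\<in>f ` (S \<times> S). 0 < a"
    proof
      fix a assume "a \<in> f ` (S \<times> S)"
      then obtain p where p: "p \<in> S \<times> S" "a = f p" by blast
      then have "snd p \<in> set_pmf (reshuffle_dist E (fst p) k)" using kS by auto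
      then show "0 < a" unfolding p f_def by (simp add: pmf_positive)
    qed
  qed
  have \<delta>le: "\<And>\<xi> \<eta>. \<xi> \<in> S \<Longrightarrow> \<eta> \<in> S \<Longrightarrow> \<delta> \<le> pmf (reshuffle_dist E \<xi> k) \<eta>"
  proof -
    fix \<xi> \<eta> assume "\<xi> \<in> S" "\<eta> \<in> S"
    then have "f (\<xi>, \<eta>) \<in> f ` (S \<times> S)" by blast
    then show "\<delta> \<le> pmf (reshuffle_dist E \<xi> k) \<eta>"
      unfolding \<delta>_def using finS by (simp add: f_def Min_le)
  qed
  have cs: "\<And>\<eta>. \<eta> \<in> S \<Longrightarrow> (\<Sum>\<zeta>\<in>S. pmf (reshuffle_dist E \<zeta> k) \<eta>) = 1"
    unfolding S_def by (rule colsum)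
  have \<delta>N: "\<delta> * N \<le> 1"
  proof -
    obtain \<eta>' where "\<eta>' \<in> S" using Sne by blast
    have "real (card S) * \<delta> \<le> (\<Sum>\<zeta>\<in>S. pmf (reshuffle_dist E \<zeta> k) \<eta>')"
      by (rule sum_bounded_below) (use \<delta>le \<open>\<eta>' \<in> S\<close> in auto)
    then show ?thesis using cs[OF \<open>\<eta>' \<in> S\<close>] unfolding N_def by (simp add: mult.commute)
  qed
  define q where "q = 1 - \<delta> * N"
  have q0: "0 \<le> q" and q1: "q < 1" unfolding q_def using \<delta>N \<delta>pos Npos by auto
  have sum\<mu>: "\<And>t. sum (\<mu> t) S = 1"
    unfolding \<mu>_def S_def by (rule sum_pmf_eq_1[OF configs_finite[OF finV] dist_support[OF \<xi>0]])
  have split: "\<And>t \<eta>. \<mu> (t + k) \<eta> = (\<Sum>\<zeta>\<in>S. \<mu> t \<zeta> * pmf (reshuffle_dist E \<zeta> k) \<eta>)"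
    unfolding \<mu>_def S_def by (rule pmf_dist_add[OF \<xi>0])
  have main: "\<exists>a b. b - a \<le> q ^ n \<and> (\<forall>j. \<forall>\<eta>\<in>S. a \<le> \<mu> (n * k + j) \<eta> \<and> \<mu> (n * k + j) \<eta> \<le> b)" for n
  proof (induction n)
    case 0
    show ?case by (rule exI[of _ 0], rule exI[of _ 1]) (simp add: \<mu>_def pmf_le_1)
  next
    case (Suc n)
    then obtain a b where ab: "b - a \<le> q ^ n"
      "\<forall>j. \<forall>\<eta>\<in>S. a \<le> \<mu> (n * k + j) \<eta> \<and> \<mu> (n * k + j) \<eta> \<le> b" by blast
    define a' where "a' = a + \<delta> * (1 - N * a)"
    define b' where "b' = b - \<delta> * (N * b - 1)"
    have "b' - a' = q * (b - a)" unfolding a'_def b'_def q_def by (simp add: algebra_simps)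
    also have "\<dots> \<le> q * q ^ n" using ab(1) q0 by (rule mult_left_mono)
    finally have w: "b' - a' \<le> q ^ Suc n" by simp
    have "\<forall>j. \<forall>\<eta>\<in>S. a' \<le> \<mu> (Suc n * k + j) \<eta> \<and> \<mu> (Suc n * k + j) \<eta> \<le> b'"
    proof (intro allI ballI)
      fix j \<eta> assume \<eta>S: "\<eta> \<in> S"
      have e: "Suc n * k + j = (n * k + j) + k" by simp
      have "a + \<delta> * (1 - real (card S) * a) \<le> (\<Sum>\<zeta>\<in>S. \<mu> (n * k + j) \<zeta> * pmf (reshuffle_dist E \<zeta> k) \<eta>)
          \<and> (\<Sum>\<zeta>\<in>S. \<mu> (n * k + j) \<zeta> * pmf (reshuffle_dist E \<zeta> k) \<eta>) \<le> b - \<delta> * (real (card S) * b - 1)"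
        by (rule interval_step[OF finS]) (use \<delta>le \<eta>S cs ab(2) sum\<mu> in auto)
      then show "a' \<le> \<mu> (Suc n * k + j) \<eta> \<and> \<mu> (Suc n * k + j) \<eta> \<le> b'"
        unfolding e split a'_def b'_def N_def .
    qed
    then show ?case using w by blast
  qed
  have bound: "\<bar>\<mu> t \<eta> - 1 / N\<bar> \<le> q ^ (t div k)" for t
  proof -
    obtain a b where ab: "b - a \<le> q ^ (t div k)"
      "\<forall>j. \<forall>\<eta>\<in>S. a \<le> \<mu> (t div k * k + j) \<eta> \<and> \<mu> (t div k * k + j) \<eta> \<le> b"
      using main by blast
    have tt: "t div k * k + t mod k = t" by simp
    have h: "\<forall>\<eta>\<in>S. a \<le> \<mu> t \<eta> \<and> \<mu> t \<eta> \<le> b"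
      using spec[OF ab(2), of "t mod k"] unfolding tt .
    have "N * a \<le> 1"
    proof -
      have "real (card S) * a \<le> sum (\<mu> t) S" by (rule sum_bounded_below) (use h in auto)
      then show ?thesis using sum\<mu> unfolding N_def by simp
    qed
    moreover have "1 \<le> N * b"
    proof -
      have "sum (\<mu> t) S \<le> real (card S) * b" by (rule sum_bounded_above) (use h in auto)
      then show ?thesis using sum\<mu> unfolding N_def by simp
    qed
    ultimately have "a \<le> 1 / N" "1 / N \<le> b" using Npos by (auto simp: field_simps)
    moreover have "a \<le> \<mu> t \<eta>" "\<mu> t \<eta> \<le> b" using h \<eta> S_def by auto
    ultimately show ?thesis using ab(1) by linarith
  qed
  have lim0: "(\<lambda>t. q ^ (t div k)) \<longlonglongrightarrow> 0"
    using filterlim_compose[OF LIMSEQ_power_zero[of q] filterlim_div_nat[OF kpos]] q0 q1 by simp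
  have "(\<lambda>t. \<mu> t \<eta> - 1 / N) \<longlonglongrightarrow> 0"
    by (rule Lim_null_comparison[OF _ lim0]) (use bound in simp)
  then have "(\<lambda>t. \<mu> t \<eta> - 1 / N + 1 / N) \<longlonglongrightarrow> 0 + 1 / N"
    by (intro tendsto_add tendsto_const)
  then show ?thesis unfolding \<mu>_def N_def S_def by simp
qed

end


lemma card_slice:
  assumes finV: "finite V" and x: "x \<in> V" and c: "c \<le> M"
  shows "card {\<eta> \<in> configs V M. \<eta> x = c} = card (configs (V - {x}) (M - c))"
proof (rule bij_betw_same_card[of "\<lambda>\<eta>. \<eta>(x := 0)"], rule bij_betw_byWitness[where f'="\<lambda>\<zeta>. \<zeta>(x := c)"])
  have sr: "sum f V = f x + sum f (V - {x})" for f :: "'a \<Rightarrow> nat"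
    using finV x by (simp add: sum.remove)
  show "\<forall>a\<in>{\<eta> \<in> configs V M. \<eta> x = c}. a(x := 0, x := c) = a" by auto
  show "\<forall>a\<in>configs (V - {x}) (M - c). a(x := c, x := 0) = a"
    by (auto simp: configs_def fun_eq_iff)
  show "(\<lambda>\<eta>. \<eta>(x := 0)) ` {\<eta> \<in> configs V M. \<eta> x = c} \<subseteq> configs (V - {x}) (M - c)"
  proof
    fix \<zeta> assume "\<zeta> \<in> (\<lambda>\<eta>. \<eta>(x := 0)) ` {\<eta> \<in> configs V M. \<eta> x = c}"
    then obtain \<eta> where h: "\<eta> \<in> configs V M" "\<eta> x = c" "\<zeta> = \<eta>(x := 0)" by blast
    have "sum \<zeta> (V - {x}) = sum \<eta> (V - {x})" unfolding h(3) by (rule sum.cong) auto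
    also have "\<dots> = M - c"
    proof -
      have "\<eta> x + sum \<eta> (V - {x}) = M" using sr[of \<eta>] h(1) unfolding configs_def by simp
      then show ?thesis using h(2) by linarith
    qed
    finally show "\<zeta> \<in> configs (V - {x}) (M - c)"
      using h(1) unfolding h(3) by (auto simp: configs_def)
  qed
  show "(\<lambda>\<zeta>. \<zeta>(x := c)) ` configs (V - {x}) (M - c) \<subseteq> {\<eta> \<in> configs V M. \<eta> x = c}"
  proof
    fix \<eta> assume "\<eta> \<in> (\<lambda>\<zeta>. \<zeta>(x := c)) ` configs (V - {x}) (M - c)"
    then obtain \<zeta> where h: "\<zeta> \<in> configs (V - {x}) (M - c)" "\<eta> = \<zeta>(x := c)" by blast
    have "sum \<eta> (V - {x}) = sum \<zeta> (V - {x})" unfolding h(2) by (rule sum.cong) auto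
    then have "sum \<eta> V = M" using sr[of \<eta>] h c by (simp add: configs_def)
    moreover have "\<forall>z. z \<notin> V \<longrightarrow> \<eta> z = 0" using h x by (auto simp: configs_def)
    ultimately show "\<eta> \<in> {\<eta> \<in> configs V M. \<eta> x = c}" using h(2) by (simp add: configs_def)
  qed
qed

theorem theorem1:
  fixes V :: "'v set" and E :: "('v \<times> 'v) set" and M c :: nat
    and \<xi>0 :: "'v \<Rightarrow> nat" and x :: 'v
  assumes "finite_graph V E" and "connected_graph V E"
    and "card V \<ge> 2"
    and "\<xi>0 \<in> configs V M"
    and "x \<in> V" and "c \<le> M"
  shows "(\<lambda>t. measure_pmf.prob (reshuffle_dist E \<xi>0 t) {\<xi>. \<xi> x = c})
           \<longlonglongrightarrow> real ((M - c + card V - 2) choose (card V - 2))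
                / real ((M + card V - 1) choose (card V - 1))"
proof -
  have finV: "finite V" using assms(1) unfolding finite_graph_def by simp
  obtain y where y: "y \<in> V" "y \<noteq> x"
  proof -
    have "card (V - {x}) \<ge> 1" using assms(3,5) finV by simp
    then have "V - {x} \<noteq> {}" by (metis card.empty not_one_le_zero)
    then show ?thesis using that by blast
  qed
  have "(x, y) \<in> (E \<union> E\<inverse>)\<^sup>*" using assms(2,5) y(1) unfolding connected_graph_def by blast
  then obtain z where "(x, z) \<in> E \<union> E\<inverse>" using y(2) by (auto elim: converse_rtranclE)
  then have Ene: "E \<noteq> {}" by auto
  interpret rs V E using assms(1) Ene by unfold_locales
  define S where "S = configs V M"
  define A where "A = {\<eta> \<in> S. \<eta> x = c}"
  have finS: "finite S" unfolding S_def by (rule configs_finite[OF finV])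
  have finA: "finite A" unfolding A_def using finS by simp
  have prob: "measure_pmf.prob (reshuffle_dist E \<xi>0 t) {\<xi>. \<xi> x = c} = (\<Sum>\<eta>\<in>A. pmf (reshuffle_dist E \<xi>0 t) \<eta>)" for t
  proof -
    let ?p = "reshuffle_dist E \<xi>0 t"
    have sub: "set_pmf ?p \<subseteq> S" unfolding S_def by (rule dist_support[OF assms(4)])
    have "measure_pmf.prob ?p {\<xi>. \<xi> x = c} = measure_pmf.prob ?p ({\<xi>. \<xi> x = c} \<inter> set_pmf ?p)"
      by (rule measure_Int_set_pmf[symmetric])
    also have "{\<xi>. \<xi> x = c} \<inter> set_pmf ?p = A \<inter> set_pmf ?p" using sub unfolding A_def by auto
    also have "measure_pmf.prob ?p (A \<inter> set_pmf ?p) = measure_pmf.prob ?p A"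
      by (rule measure_Int_set_pmf)
    also have "\<dots> = (\<Sum>\<eta>\<in>A. pmf ?p \<eta>)" by (rule measure_measure_pmf_finite[OF finA])
    finally show ?thesis .
  qed
  have "(\<lambda>t. \<Sum>\<eta>\<in>A. pmf (reshuffle_dist E \<xi>0 t) \<eta>) \<longlonglongrightarrow> (\<Sum>\<eta>\<in>A. 1 / real (card S))"
  proof (rule tendsto_sum)
    fix \<eta> assume "\<eta> \<in> A"
    then have "\<eta> \<in> configs V M" unfolding A_def S_def by simp
    then show "(\<lambda>t. pmf (reshuffle_dist E \<xi>0 t) \<eta>) \<longlonglongrightarrow> 1 / real (card S)"
      unfolding S_def by (rule convergence[OF assms(2,4)])
  qed
  moreover have "(\<Sum>\<eta>\<in>A. 1 / real (card S)) = real (card A) / real (card S)" by simp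
  moreover have "card S = (M + card V - 1) choose (card V - 1)"
    unfolding S_def using configs_card[OF finV] assms(5) by auto
  moreover have "card A = (M - c + card V - 2) choose (card V - 2)"
  proof -
    have "card A = card (configs (V - {x}) (M - c))"
      unfolding A_def S_def by (rule card_slice[OF finV assms(5,6)])
    also have "\<dots> = (M - c + card (V - {x}) - 1) choose (card (V - {x}) - 1)"
      by (rule configs_card) (use finV y in auto)
    also have "card (V - {x}) = card V - 1" using finV assms(5) by simp
    finally show ?thesis using assms(3) by (simp add: numeral_2_eq_2)
  qed
  ultimately show ?thesis unfolding prob by simp
qed

end
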